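(* There exist absolute constants $c_1, c_2 > 0$ with the following property. Let $m$ be a positive integer, let $X$ be a symmetric, unit-variance random variable that is super-Gaussian with parameter $\sigma > 0$, and let $b = (b_1,\dots,b_m)$ be a random vector in $\mathbb{R}^m$ with i.i.d. entries distributed as $X$. Then \[ \mathbb{P}\big(|\langle b, w\rangle| > u\big) > c_1 \exp\Big(-\frac{c_2 u^2}{2\sigma^2}\Big) \] for all $u \geq \sigma/4$ and all $w \in \mathbb{R}^m$ with $\|w\|_2 = 1$.
   Context: A random variable $X$ with $\mathbb{E}[X]=0$ and $\mathbb{E}[X^2]=1$ is super-Gaussian with parameter $\sigma>0$ if $\mathbb{P}(|\sigma g| > t) \leq \mathbb{P}(|X| > t)$ for all $t>0$, where $g$ is a standard normal random variable. *)

theory Defs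
  imports "HOL-Probability.Probability"
begin

text \<open>A real random variable is described by its law \<mu>, a probability measure on the
  Borel sets of the reals.  \<mu> is the law of a mean-zero, unit-variance variable X.\<close>
definition centered_unit_variance :: "real measure \<Rightarrow> bool" where
  "centered_unit_variance \<mu> \<longleftrightarrow>
     prob_space \<mu> \<and> sets \<mu> = sets borel \<and>
     integrable \<mu> (\<lambda>x. x) \<and> (\<integral>x. x \<partial>\<mu>) = 0 \<and>
     integrable \<mu> (\<lambda>x. x^2) \<and> (\<integral>x. x^2 \<partial>\<mu>) = 1"

definition symmetric_law :: "real measure \<Rightarrow> bool" where
  "symmetric_law \<mu> \<longleftrightarrow> distr \<mu> borel uminus = \<mu>"

definition super_gaussian :: "real measure \<Rightarrow> real \<Rightarrow> bool" where
  "super_gaussian \<mu> \<sigma> \<longleftrightarrow> centered_unit_variance \<mu> \<and> \<sigma> > 0 \<and>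
     (\<forall>t>0. measure (density lborel std_normal_density) {g. \<bar>\<sigma> * g\<bar> > t}
             \<le> measure \<mu> {x. \<bar>x\<bar> > t})"

end

theory Submission
  imports Defs
begin


lemma chain_bound:
  fixes \<theta> z :: "nat \<Rightarrow> real"
  assumes fin: "finite I" and th: "\<And>i. i \<in> I \<Longrightarrow> 0 \<le> \<theta> i \<and> \<theta> i \<le> 1" and u: "0 \<le> u"
    and ch: "\<And>t. t \<in> \<theta> ` I \<Longrightarrow> 0 < t \<Longrightarrow> \<bar>\<Sum>i\<in>{i\<in>I. t \<le> \<theta> i}. z i\<bar> \<le> u"
  shows "\<bar>\<Sum>i\<in>I. \<theta> i * z i\<bar> \<le> u"
proof -
  define f where "f t = (\<Sum>i\<in>I. z i * indicator {0<..\<theta> i} t)" for t :: real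
  have fm: "emeasure lborel {0<..(\<theta> i)} < \<top>" for i by (cases "0 \<le> \<theta> i") auto
  have intI: "integrable lborel (\<lambda>t. z i * indicator {0<..\<theta> i} t :: real)" for i
    by (intro integrable_mult_right integrable_real_indicator) (auto simp: fm)
  have intf: "integrable lborel f" unfolding f_def[abs_def] by (auto intro!: intI)
  have "(\<Sum>i\<in>I. \<theta> i * z i) = (\<Sum>i\<in>I. z i * measure lborel {0<..\<theta> i})"
    using th by (intro sum.cong) auto
  also have "\<dots> = (\<Sum>i\<in>I. integral\<^sup>L lborel (\<lambda>t. z i * indicator {0<..\<theta> i} t))"
    by (intro sum.cong refl) (simp add: integral_indicator)
  also have "\<dots> = integral\<^sup>L lborel f"
    unfolding f_def[abs_def] by (subst Bochner_Integration.integral_sum) (auto simp: fm)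
  finally have eq: "(\<Sum>i\<in>I. \<theta> i * z i) = integral\<^sup>L lborel f" .
  have bnd: "\<bar>f t\<bar> \<le> u * indicator {0<..1} t" for t
  proof (cases "0 < t \<and> t \<le> 1")
    case False
    then have "f t = 0" unfolding f_def using th
      by (intro sum.neutral) (auto simp: indicator_def, force)
    then show ?thesis using u by (simp add: indicator_def)
  next
    case True
    define K where "K = {i\<in>I. t \<le> \<theta> i}"
    have ft: "f t = (\<Sum>i\<in>K. z i)"
      unfolding f_def K_def using True
      by (simp add: indicator_def sum.inter_filter[symmetric] fin Int_def)
    show ?thesis
    proof (cases "K = {}")
      case True
      then show ?thesis using ft u by (simp add: indicator_def)
    next
      case False
      define t' where "t' = Min (\<theta> ` K)"
      have finK: "finite K" using fin K_def by auto
      have t'in: "t' \<in> \<theta> ` K" unfolding t'_def using False finK by (intro Min_in) auto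
      have tt': "t \<le> t'" using t'in K_def by auto
      have KK: "{i\<in>I. t' \<le> \<theta> i} = K"
        using tt' finK t'_def K_def by (auto intro: Min_le)
      have "\<bar>f t\<bar> \<le> u" using ch[of t'] t'in tt' True KK ft K_def by auto
      then show ?thesis using True by (simp add: indicator_def)
    qed
  qed
  have "\<bar>integral\<^sup>L lborel f\<bar> \<le> integral\<^sup>L lborel (\<lambda>t. \<bar>f t\<bar>)"
    using integral_norm_bound[of lborel f] by simp
  also have "\<dots> \<le> integral\<^sup>L lborel (\<lambda>t::real. u * indicator {0<..1} t)"
  proof (rule Bochner_Integration.integral_mono)
    show "integrable lborel (\<lambda>t. \<bar>f t\<bar>)" using intf by auto
    show "integrable lborel (\<lambda>t::real. u * indicator {0<..1} t :: real)" by auto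
    show "\<And>t. t \<in> space lborel \<Longrightarrow> \<bar>f t\<bar> \<le> u * indicator {0<..1} t" using bnd by auto
  qed
  also have "\<dots> = u" by (simp add: integral_indicator)
  finally show ?thesis using eq by simp
qed

definition sv :: "nat set \<Rightarrow> (nat \<Rightarrow> real) set" where
  "sv I = PiE I (\<lambda>_. {-1, 1})"

definition cnt :: "nat set \<Rightarrow> real \<Rightarrow> (nat \<Rightarrow> real) \<Rightarrow> nat" where
  "cnt I u x = card {e \<in> sv I. u < \<bar>\<Sum>i\<in>I. e i * x i\<bar>}"

lemma finite_sv: "finite I \<Longrightarrow> finite (sv I)"
  unfolding sv_def by (intro finite_PiE) auto

lemma cnt_sign:
  assumes fin: "finite I" and s: "\<And>i. i \<in> I \<Longrightarrow> s i \<in> {-1, 1}"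
  shows "cnt I u (\<lambda>i. s i * x i) = cnt I u x"
proof -
  define g where "g e = (\<lambda>i\<in>I. s i * e i)" for e :: "nat \<Rightarrow> real"
  have gsv: "g e \<in> sv I" if "e \<in> sv I" for e
  proof -
    have "s i * e i \<in> {-1, 1}" if "i \<in> I" for i
      using s[OF that] \<open>e \<in> sv I\<close> that unfolding sv_def by (auto simp: PiE_iff)
    then show ?thesis unfolding g_def sv_def by (auto simp: PiE_iff)
  qed
  have gg: "g (g e) = e" if "e \<in> sv I" for e
  proof
    fix i show "g (g e) i = e i"
      using that s[of i] unfolding g_def sv_def by (cases "i \<in> I") (auto simp: PiE_iff extensional_def)
  qed
  have gsum: "(\<Sum>i\<in>I. g e i * x i) = (\<Sum>i\<in>I. e i * (s i * x i))" for e
    unfolding g_def by (intro sum.cong) auto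
  have "bij_betw g {e \<in> sv I. u < \<bar>\<Sum>i\<in>I. e i * (s i * x i)\<bar>} {e \<in> sv I. u < \<bar>\<Sum>i\<in>I. e i * x i\<bar>}"
  proof (rule bij_betw_byWitness[where f' = g])
    show "\<forall>a\<in>{e \<in> sv I. u < \<bar>\<Sum>i\<in>I. e i * (s i * x i)\<bar>}. g (g a) = a" using gg by auto
    show "\<forall>a\<in>{e \<in> sv I. u < \<bar>\<Sum>i\<in>I. e i * x i\<bar>}. g (g a) = a" using gg by auto
    show "g ` {e \<in> sv I. u < \<bar>\<Sum>i\<in>I. e i * (s i * x i)\<bar>} \<subseteq> {e \<in> sv I. u < \<bar>\<Sum>i\<in>I. e i * x i\<bar>}"
    proof safe
      fix e assume "e \<in> sv I" "u < \<bar>\<Sum>i\<in>I. e i * (s i * x i)\<bar>"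
      then show "g e \<in> sv I" "u < \<bar>\<Sum>i\<in>I. g e i * x i\<bar>" using gsv gsum by auto
    qed
    show "g ` {e \<in> sv I. u < \<bar>\<Sum>i\<in>I. e i * x i\<bar>} \<subseteq> {e \<in> sv I. u < \<bar>\<Sum>i\<in>I. e i * (s i * x i)\<bar>}"
    proof safe
      fix e assume e: "e \<in> sv I" "u < \<bar>\<Sum>i\<in>I. e i * x i\<bar>"
      show "g e \<in> sv I" using gsv e by auto
      have "(\<Sum>i\<in>I. g e i * (s i * x i)) = (\<Sum>i\<in>I. e i * x i)"
      proof (intro sum.cong refl)
        fix i assume i: "i \<in> I"
        have ss: "s i * s i = 1" using s[OF i] by auto
        have "g e i * (s i * x i) = (s i * s i) * (e i * x i)" using i unfolding g_def by (simp add: algebra_simps)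
        then show "g e i * (s i * x i) = e i * x i" using ss by simp
      qed
      then show "u < \<bar>\<Sum>i\<in>I. g e i * (s i * x i)\<bar>" using e by simp
    qed
  qed
  then show ?thesis unfolding cnt_def by (rule bij_betw_same_card)
qed

lemma cnt_abs:
  assumes fin: "finite I"
  shows "cnt I u x = cnt I u (\<lambda>i. \<bar>x i\<bar>)"
proof -
  define s where "s i = (if x i < 0 then -1 else 1::real)" for i
  have "cnt I u (\<lambda>i. s i * \<bar>x i\<bar>) = cnt I u (\<lambda>i. \<bar>x i\<bar>)"
    by (rule cnt_sign[OF fin]) (auto simp: s_def)
  moreover have "(\<lambda>i. s i * \<bar>x i\<bar>) = x" by (auto simp: s_def fun_eq_iff)
  ultimately show ?thesis by simp
qed

lemma contraction_pos:
  fixes \<theta> x :: "nat \<Rightarrow> real"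
  assumes fin: "finite I" and th: "\<And>i. i \<in> I \<Longrightarrow> 0 \<le> \<theta> i \<and> \<theta> i \<le> 1" and u: "0 \<le> u"
  shows "cnt I u (\<lambda>i. \<theta> i * x i) \<le> 2 * cnt I u x"
proof -
  define T where "T = \<theta> ` I \<inter> {0<..}"
  define L where "L t = {i\<in>I. t \<le> \<theta> i}" for t
  define Sc where "Sc K e = (\<Sum>i\<in>K. e i * x i)" for K e
  define A where "A e = {t\<in>T. u < \<bar>Sc (L t) e\<bar>}" for e
  define \<Omega> where "\<Omega> = {e\<in>sv I. A e \<noteq> {}}"
  define ts where "ts e = Max (A e)" for e
  define r where "r e = (\<lambda>i\<in>I. if ts e \<le> \<theta> i then e i else - e i)" for e
  define B where "B = {e\<in>sv I. u < \<bar>Sc I e\<bar>}"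
  have finT: "finite T" unfolding T_def using fin by auto
  have finA: "finite (A e)" for e unfolding A_def using finT by auto
  have tsA: "ts e \<in> A e" if "e \<in> \<Omega>" for e
    using that finA unfolding ts_def \<Omega>_def by (intro Max_in) auto
  have tsmax: "t \<le> ts e" if "e \<in> \<Omega>" "t \<in> A e" for e t
    using that finA unfolding ts_def by (intro Max_ge) auto
  have ScL: "Sc (L t) (r e) = Sc (L t) e" if "ts e \<le> t" for e t
    unfolding Sc_def L_def r_def using that by (intro sum.cong refl) auto
  have rsv: "r e \<in> sv I" if "e \<in> sv I" for e
    using that unfolding r_def sv_def by (auto simp: PiE_iff)
  have Ar: "ts e \<in> A (r e) \<and> (\<forall>t\<in>A (r e). t \<le> ts e)" if e: "e \<in> \<Omega>" for e
  proof
    show "ts e \<in> A (r e)" using tsA[OF e] ScL[of e "ts e"] unfolding A_def by auto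
    show "\<forall>t\<in>A (r e). t \<le> ts e"
    proof
      fix t assume t: "t \<in> A (r e)"
      show "t \<le> ts e"
      proof (rule ccontr)
        assume "\<not> t \<le> ts e"
        then have "Sc (L t) (r e) = Sc (L t) e" by (intro ScL) auto
        then have "t \<in> A e" using t unfolding A_def by auto
        then show False using tsmax[OF e] \<open>\<not> t \<le> ts e\<close> by auto
      qed
    qed
  qed
  have r\<Omega>: "r e \<in> \<Omega> \<and> ts (r e) = ts e" if e: "e \<in> \<Omega>" for e
  proof
    show "r e \<in> \<Omega>" using Ar[OF e] rsv e unfolding \<Omega>_def by auto
    show "ts (r e) = ts e" unfolding ts_def[of "r e"] using Ar[OF e] finA
      by (intro Max_eqI) auto
  qed
  have rr: "r (r e) = e" if e: "e \<in> \<Omega>" for e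
  proof
    fix i
    show "r (r e) i = e i"
    proof (cases "i \<in> I")
      case True
      then show ?thesis using r\<Omega>[OF e] unfolding r_def by auto
    next
      case False
      then show ?thesis using e unfolding r_def \<Omega>_def sv_def by (auto simp: PiE_iff extensional_def)
    qed
  qed
  have sum2: "Sc I e + Sc I (r e) = 2 * Sc (L (ts e)) e" for e
  proof -
    have "Sc I e + Sc I (r e) = (\<Sum>i\<in>I. (if ts e \<le> \<theta> i then 2 * (e i * x i) else 0))"
      unfolding Sc_def r_def by (subst sum.distrib[symmetric]) (intro sum.cong refl, auto simp: algebra_simps)
    also have "\<dots> = 2 * Sc (L (ts e)) e"
      unfolding Sc_def L_def using fin
      by (simp add: sum.inter_filter[symmetric] sum_distrib_left Int_def conj_commute)
    finally show ?thesis .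
  qed
  have disj: "e \<in> B \<or> r e \<in> B" if e: "e \<in> \<Omega>" for e
  proof (rule ccontr)
    assume "\<not> (e \<in> B \<or> r e \<in> B)"
    then have "\<bar>Sc I e\<bar> \<le> u" "\<bar>Sc I (r e)\<bar> \<le> u"
      using e rsv unfolding B_def \<Omega>_def by auto
    moreover have "u < \<bar>Sc (L (ts e)) e\<bar>" using tsA[OF e] unfolding A_def by auto
    ultimately show False using sum2[of e] by linarith
  qed
  have sub1: "{e \<in> sv I. u < \<bar>\<Sum>i\<in>I. e i * (\<theta> i * x i)\<bar>} \<subseteq> \<Omega>"
  proof
    fix e assume e: "e \<in> {e \<in> sv I. u < \<bar>\<Sum>i\<in>I. e i * (\<theta> i * x i)\<bar>}"
    show "e \<in> \<Omega>"
    proof (rule ccontr)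
      assume "e \<notin> \<Omega>"
      then have A0: "A e = {}" using e unfolding \<Omega>_def by auto
      have "\<bar>\<Sum>i\<in>I. \<theta> i * (e i * x i)\<bar> \<le> u"
      proof (rule chain_bound[OF fin th u])
        fix t assume "t \<in> \<theta> ` I" "0 < t"
        then have "t \<in> T" unfolding T_def by auto
        then show "\<bar>\<Sum>i\<in>{i \<in> I. t \<le> \<theta> i}. e i * x i\<bar> \<le> u"
          using A0 unfolding A_def Sc_def L_def by auto
      qed auto
      moreover have "(\<Sum>i\<in>I. \<theta> i * (e i * x i)) = (\<Sum>i\<in>I. e i * (\<theta> i * x i))"
        by (simp add: algebra_simps)
      ultimately show False using e by auto
    qed
  qed
  have sub2: "\<Omega> \<subseteq> (\<Omega> \<inter> B) \<union> r ` (\<Omega> \<inter> B)"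
  proof
    fix e assume e: "e \<in> \<Omega>"
    show "e \<in> (\<Omega> \<inter> B) \<union> r ` (\<Omega> \<inter> B)"
    proof (cases "e \<in> B")
      case True then show ?thesis using e by auto
    next
      case False
      then have "r e \<in> \<Omega> \<inter> B" using disj[OF e] r\<Omega>[OF e] by auto
      moreover have "e = r (r e)" using rr[OF e] by simp
      ultimately show ?thesis by blast
    qed
  qed
  have finsv: "finite (sv I)" using finite_sv[OF fin] .
  have finO: "finite \<Omega>" using finsv unfolding \<Omega>_def by auto
  have finB: "finite B" using finsv unfolding B_def by auto
  have "cnt I u (\<lambda>i. \<theta> i * x i) \<le> card \<Omega>"
    unfolding cnt_def by (intro card_mono finO sub1)
  also have "\<dots> \<le> card ((\<Omega> \<inter> B) \<union> r ` (\<Omega> \<inter> B))"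
    using finO by (intro card_mono sub2) auto
  also have "\<dots> \<le> card (\<Omega> \<inter> B) + card (r ` (\<Omega> \<inter> B))"
    by (rule card_Un_le)
  also have "\<dots> \<le> card (\<Omega> \<inter> B) + card (\<Omega> \<inter> B)"
    using card_image_le[of "\<Omega> \<inter> B" r] finO by auto
  also have "\<dots> \<le> 2 * card B"
    using card_mono[OF finB, of "\<Omega> \<inter> B"] by auto
  also have "card B = cnt I u x" unfolding B_def cnt_def Sc_def by simp
  finally show ?thesis .
qed

lemma contraction:
  fixes a c :: "nat \<Rightarrow> real"
  assumes fin: "finite I" and ca: "\<And>i. i \<in> I \<Longrightarrow> \<bar>c i\<bar> \<le> \<bar>a i\<bar>" and u: "0 \<le> u"
  shows "cnt I u c \<le> 2 * cnt I u a"
proof -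
  define \<theta> where "\<theta> i = (if a i = 0 then 0 else \<bar>c i\<bar> / \<bar>a i\<bar>)" for i
  have th: "0 \<le> \<theta> i \<and> \<theta> i \<le> 1" if "i \<in> I" for i
    using ca[OF that] unfolding \<theta>_def by (auto simp: divide_le_eq_1)
  have ceq: "cnt I u (\<lambda>i. \<bar>c i\<bar>) = cnt I u (\<lambda>i. \<theta> i * \<bar>a i\<bar>)"
    unfolding cnt_def
  proof (intro arg_cong[where f=card] Collect_cong conj_cong refl arg_cong2[where f="(<)"] arg_cong[where f=abs] sum.cong)
    fix i assume "i \<in> I"
    then show "e i * \<bar>c i\<bar> = e i * (\<theta> i * \<bar>a i\<bar>)" for e using ca[of i] unfolding \<theta>_def by auto
  qed
  have "cnt I u c = cnt I u (\<lambda>i. \<theta> i * \<bar>a i\<bar>)" using cnt_abs[OF fin, of u c] ceq by simp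
  also have "\<dots> \<le> 2 * cnt I u (\<lambda>i. \<bar>a i\<bar>)" by (rule contraction_pos[OF fin th u])
  also have "cnt I u (\<lambda>i. \<bar>a i\<bar>) = cnt I u a" using cnt_abs[OF fin, of u a] by simp
  finally show ?thesis .
qed



lemma distr_PiM_dep:
  assumes fin: "finite I" and M: "prob_space M" and M': "prob_space M'"
    and f[measurable]: "\<And>i. i \<in> I \<Longrightarrow> f i \<in> measurable M M'"
  shows "distr (PiM I (\<lambda>_. M)) (PiM I (\<lambda>_. M')) (\<lambda>x. \<lambda>i\<in>I. f i (x i)) = PiM I (\<lambda>i. distr M M' (f i))"
proof -
  interpret MM: product_prob_space "\<lambda>_. M" by (intro product_prob_spaceI M)
  define N where "N = (\<lambda>i. if i \<in> I then distr M M' (f i) else M')"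
  interpret N: product_prob_space N
    by (intro product_prob_spaceI) (auto simp: N_def M' intro: prob_space.prob_space_distr M)
  have "distr (PiM I (\<lambda>_. M)) (PiM I (\<lambda>_. M')) (\<lambda>x. \<lambda>i\<in>I. f i (x i)) = PiM I N"
  proof (rule N.PiM_eqI)
    have N_events_eq: "sets (Pi\<^sub>M I N) = sets (Pi\<^sub>M I (\<lambda>_. M'))"
      unfolding N_def by (intro sets_PiM_cong) auto
    then show "sets (distr (Pi\<^sub>M I (\<lambda>_. M)) (Pi\<^sub>M I (\<lambda>_. M')) (\<lambda>x. \<lambda>i\<in>I. f i (x i))) = sets (Pi\<^sub>M I N)"
      by simp
    have meas: "(\<lambda>x. \<lambda>i\<in>I. f i (x i)) \<in> Pi\<^sub>M I (\<lambda>_. M) \<rightarrow>\<^sub>M Pi\<^sub>M I (\<lambda>_. M')"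
    proof (rule measurable_restrict)
      fix i assume i: "i \<in> I"
      have "(\<lambda>x. x i) \<in> measurable (Pi\<^sub>M I (\<lambda>_. M)) M"
        using measurable_component_singleton[OF i, of "\<lambda>_. M"] by simp
      then show "(\<lambda>x. f i (x i)) \<in> measurable (Pi\<^sub>M I (\<lambda>_. M)) M'"
        using f[OF i] by (rule measurable_compose)
    qed
    fix A assume A: "\<And>i. i \<in> I \<Longrightarrow> A i \<in> sets (N i)"
    have "emeasure (distr (Pi\<^sub>M I (\<lambda>_. M)) (Pi\<^sub>M I (\<lambda>_. M')) (\<lambda>x. \<lambda>i\<in>I. f i (x i))) (Pi\<^sub>E I A) =
          emeasure (Pi\<^sub>M I (\<lambda>_. M)) ((\<lambda>x. \<lambda>i\<in>I. f i (x i)) -` Pi\<^sub>E I A \<inter> space (Pi\<^sub>M I (\<lambda>_. M)))"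
    proof (intro emeasure_distr meas)
      show "Pi\<^sub>E I A \<in> sets (Pi\<^sub>M I (\<lambda>_. M'))"
        unfolding N_events_eq [symmetric] by (intro sets_PiM_I_finite fin A)
    qed
    also have "(\<lambda>x. \<lambda>i\<in>I. f i (x i)) -` Pi\<^sub>E I A \<inter> space (Pi\<^sub>M I (\<lambda>_. M)) = Pi\<^sub>E I (\<lambda>i. f i -` A i \<inter> space M)"
      using A by (auto simp: space_PiM PiE_def Pi_def extensional_def N_def)
    also have "emeasure (Pi\<^sub>M I (\<lambda>_. M)) (Pi\<^sub>E I (\<lambda>i. f i -` A i \<inter> space M)) =
          (\<Prod>i\<in>I. emeasure M (f i -` A i \<inter> space M))"
      using A by (intro MM.emeasure_PiM fin) (auto simp: N_def)
    also have "\<dots> = (\<Prod>i\<in>I. emeasure (distr M M' (f i)) (A i))"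
      using A by (intro prod.cong emeasure_distr [symmetric]) (auto simp: N_def)
    also have "\<dots> = (\<Prod>i\<in>I. emeasure (N i) (A i))"
      unfolding N_def by (intro prod.cong) (auto simp: N_def)
    finally show "emeasure (distr (Pi\<^sub>M I (\<lambda>_. M)) (Pi\<^sub>M I (\<lambda>_. M')) (\<lambda>x. \<lambda>i\<in>I. f i (x i))) (Pi\<^sub>E I A) = \<dots>" .
  qed (rule fin)
  also have "PiM I N = PiM I (\<lambda>i. distr M M' (f i))"
    by (intro PiM_cong) (auto simp: N_def)
  finally show ?thesis .
qed

definition symm :: "real measure \<Rightarrow> bool" where
  "symm \<nu> \<longleftrightarrow> distr \<nu> borel uminus = \<nu>"

lemma flip_PiM:
  assumes fin: "finite I" and rd: "real_distribution \<nu>" and sy: "symm \<nu>"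
    and e: "\<And>i. i \<in> I \<Longrightarrow> e i \<in> {-1, 1::real}"
  shows "distr (PiM I (\<lambda>_. \<nu>)) (PiM I (\<lambda>_. \<nu>)) (\<lambda>b. \<lambda>i\<in>I. e i * b i) = PiM I (\<lambda>_. \<nu>)"
proof -
  interpret real_distribution \<nu> by fact
  have meas: "(\<lambda>x. e i * x) \<in> measurable \<nu> \<nu>" for i
    by (simp add: measurable_cong_sets[OF events_eq_borel events_eq_borel])
  have d: "distr \<nu> \<nu> (\<lambda>x. e i * x) = \<nu>" if i: "i \<in> I" for i
  proof (cases "e i = 1")
    case True
    then show ?thesis by (simp add: distr_id)
  next
    case False
    then have "e i = -1" using e[OF i] by auto
    then have "distr \<nu> \<nu> (\<lambda>x. e i * x) = distr \<nu> borel uminus"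
      by (intro distr_cong) auto
    then show ?thesis using sy unfolding symm_def by simp
  qed
  have "distr (PiM I (\<lambda>_. \<nu>)) (PiM I (\<lambda>_. \<nu>)) (\<lambda>b. \<lambda>i\<in>I. e i * b i) = PiM I (\<lambda>i. distr \<nu> \<nu> (\<lambda>x. e i * x))"
    by (rule distr_PiM_dep[OF fin prob_space_axioms prob_space_axioms meas])
  also have "\<dots> = PiM I (\<lambda>_. \<nu>)" by (intro PiM_cong refl d)
  finally show ?thesis .
qed

lemma sym_facts:
  assumes rd: "real_distribution \<nu>" and sy: "symm \<nu>"
  shows "measure \<nu> {x. t < x} = measure \<nu> {x. x < -t}"
    and "0 \<le> t \<Longrightarrow> measure \<nu> {x. t < \<bar>x\<bar>} = 2 * measure \<nu> {x. t < x}"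
    and "cdf \<nu> x = 1 - measure \<nu> {y. x < y}"
    and "measure \<nu> {y. y < x} \<le> cdf \<nu> x"
proof -
  interpret real_distribution \<nu> by fact
  have "measure \<nu> {x. x < -t} = measure (distr \<nu> borel uminus) {x. x < -t}"
    using sy unfolding symm_def by simp
  also have "\<dots> = measure \<nu> (uminus -` {x. x < -t} \<inter> space \<nu>)"
    by (rule measure_distr) auto
  also have "uminus -` {x. x < -t} \<inter> space \<nu> = {x. t < x}" by auto
  finally show a: "measure \<nu> {x. t < x} = measure \<nu> {x. x < -t}" by simp
  { assume t: "0 \<le> t"
    have "{x. t < \<bar>x\<bar>} = {x. t < x} \<union> {x. x < -t}" by auto
    moreover have "measure \<nu> ({x. t < x} \<union> {x. x < -t}) = measure \<nu> {x. t < x} + measure \<nu> {x. x < -t}"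
      using t by (intro finite_measure_Union) auto
    ultimately show "measure \<nu> {x. t < \<bar>x\<bar>} = 2 * measure \<nu> {x. t < x}" using a by simp }
  have "cdf \<nu> x = measure \<nu> (space \<nu> - {y. x < y})"
    unfolding cdf_def2 by (intro arg_cong[where f="measure \<nu>"]) auto
  also have "\<dots> = 1 - measure \<nu> {y. x < y}" by (intro prob_compl) auto
  finally show "cdf \<nu> x = 1 - measure \<nu> {y. x < y}" .
  show "measure \<nu> {y. y < x} \<le> cdf \<nu> x"
    unfolding cdf_def2 by (intro finite_measure_mono) auto
qed

definition Q :: "real measure \<Rightarrow> real \<Rightarrow> real" where
  "Q \<nu> \<omega> = Inf {x. \<omega> \<le> cdf \<nu> x}"

lemma Q_pseudo:
  assumes rd: "real_distribution \<nu>" and w: "0 < \<omega>" "\<omega> < 1"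
  shows "\<omega> \<le> cdf \<nu> x \<longleftrightarrow> Q \<nu> \<omega> \<le> x"
proof -
  have cd: "cdf_distribution \<nu>" using rd unfolding cdf_distribution_def .
  interpret cdf_distribution \<nu> by (rule cd)
  show ?thesis unfolding Q_def by (rule pseudoinverse[OF w])
qed

lemma Q_nonneg:
  assumes rd: "real_distribution \<nu>" and sy: "symm \<nu>" and w: "1/2 < \<omega>" "\<omega> < 1"
  shows "0 \<le> Q \<nu> \<omega>"
proof (rule ccontr)
  interpret real_distribution \<nu> by fact
  assume "\<not> 0 \<le> Q \<nu> \<omega>"
  then have neg: "Q \<nu> \<omega> < 0" by simp
  have "\<omega> \<le> cdf \<nu> (Q \<nu> \<omega>)" using Q_pseudo[OF rd, of \<omega>] w by simp
  also have "\<dots> \<le> measure \<nu> {x. x < 0}"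
    unfolding cdf_def2 using neg by (intro finite_measure_mono) auto
  also have "\<dots> = measure \<nu> {x. 0 < x}" using sym_facts(1)[OF rd sy, of 0] by simp
  also have "\<dots> \<le> 1/2" using sym_facts(2)[OF rd sy, of 0] prob_le_1[of "{x. 0 < \<bar>x\<bar>}"] by simp
  finally show False using w by simp
qed

lemma Q_nonpos:
  assumes rd: "real_distribution \<nu>" and sy: "symm \<nu>" and w: "0 < \<omega>" "\<omega> \<le> 1/2"
  shows "Q \<nu> \<omega> \<le> 0"
proof -
  interpret real_distribution \<nu> by fact
  have "measure \<nu> {x. 0 < x} \<le> 1/2" using sym_facts(2)[OF rd sy, of 0] prob_le_1[of "{x. 0 < \<bar>x\<bar>}"] by simp
  then have "\<omega> \<le> cdf \<nu> 0" using sym_facts(3)[OF rd sy, of 0] w by simp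
  then show ?thesis using Q_pseudo[OF rd, of \<omega> 0] w by simp
qed

lemma Q_compare:
  assumes rd1: "real_distribution \<nu>1" and sy1: "symm \<nu>1"
    and rd2: "real_distribution \<nu>2" and sy2: "symm \<nu>2"
    and tail: "\<And>t. 0 < t \<Longrightarrow> measure \<nu>2 {x. t < \<bar>x\<bar>} \<le> measure \<nu>1 {x. t < \<bar>x\<bar>}"
    and w: "0 < \<omega>" "\<omega> < 1"
  shows "\<bar>Q \<nu>2 \<omega>\<bar> \<le> \<bar>Q \<nu>1 \<omega>\<bar>"
proof (cases "1/2 < \<omega>")
  case True
  have n1: "0 \<le> Q \<nu>1 \<omega>" by (rule Q_nonneg[OF rd1 sy1 True w(2)])
  have n2: "0 \<le> Q \<nu>2 \<omega>" by (rule Q_nonneg[OF rd2 sy2 True w(2)])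
  have "Q \<nu>2 \<omega> \<le> Q \<nu>1 \<omega>"
  proof (rule ccontr)
    assume "\<not> Q \<nu>2 \<omega> \<le> Q \<nu>1 \<omega>"
    define x where "x = (Q \<nu>1 \<omega> + Q \<nu>2 \<omega>) / 2"
    have x: "Q \<nu>1 \<omega> < x" "x < Q \<nu>2 \<omega>" "0 < x"
      using \<open>\<not> Q \<nu>2 \<omega> \<le> Q \<nu>1 \<omega>\<close> n1 unfolding x_def by auto
    have "\<omega> \<le> cdf \<nu>1 x" using Q_pseudo[OF rd1 w, of x] x by simp
    also have "cdf \<nu>1 x = 1 - measure \<nu>1 {x. 0 < x} * 0 - measure \<nu>1 {y. x < y}"
      using sym_facts(3)[OF rd1 sy1] by simp
    also have "\<dots> = 1 - measure \<nu>1 {y. x < \<bar>y\<bar>} / 2"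
      using sym_facts(2)[OF rd1 sy1, of x] x by simp
    also have "\<dots> \<le> 1 - measure \<nu>2 {y. x < \<bar>y\<bar>} / 2"
      using tail[of x] x by simp
    also have "\<dots> = cdf \<nu>2 x"
      using sym_facts(2)[OF rd2 sy2, of x] sym_facts(3)[OF rd2 sy2, of x] x by simp
    finally have "Q \<nu>2 \<omega> \<le> x" using Q_pseudo[OF rd2 w, of x] by simp
    then show False using x by simp
  qed
  then show ?thesis using n1 n2 by simp
next
  case False
  then have w2: "\<omega> \<le> 1/2" by simp
  have n2: "Q \<nu>2 \<omega> \<le> 0" by (rule Q_nonpos[OF rd2 sy2 w(1) w2])
  have n1: "Q \<nu>1 \<omega> \<le> 0" by (rule Q_nonpos[OF rd1 sy1 w(1) w2])
  have "Q \<nu>1 \<omega> \<le> Q \<nu>2 \<omega>"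
  proof (rule ccontr)
    assume c: "\<not> Q \<nu>1 \<omega> \<le> Q \<nu>2 \<omega>"
    define y where "y = Q \<nu>2 \<omega>"
    have yneg: "y < 0" using c n1 n2 unfolding y_def by auto
    define y' where "y' = (y + Q \<nu>1 \<omega>) / 2"
    have y': "y < y'" "y' < Q \<nu>1 \<omega>" "y' < 0" using c n1 yneg unfolding y'_def y_def by auto
    interpret R2: real_distribution \<nu>2 by fact
    have "\<omega> \<le> cdf \<nu>2 y" using Q_pseudo[OF rd2 w, of y] unfolding y_def by simp
    also have "\<dots> \<le> measure \<nu>2 {z. z < y'}"
      unfolding cdf_def2 using y' by (intro R2.finite_measure_mono) auto
    also have "\<dots> = measure \<nu>2 {z. -y' < \<bar>z\<bar>} / 2"
      using sym_facts(1)[OF rd2 sy2, of "-y'"] sym_facts(2)[OF rd2 sy2, of "-y'"] y' by simp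
    also have "\<dots> \<le> measure \<nu>1 {z. -y' < \<bar>z\<bar>} / 2"
      using tail[of "-y'"] y' by simp
    also have "\<dots> = measure \<nu>1 {z. z < y'}"
      using sym_facts(1)[OF rd1 sy1, of "-y'"] sym_facts(2)[OF rd1 sy1, of "-y'"] y' by simp
    also have "\<dots> \<le> cdf \<nu>1 y'" by (rule sym_facts(4)[OF rd1 sy1])
    finally have "Q \<nu>1 \<omega> \<le> y'" using Q_pseudo[OF rd1 w, of y'] by simp
    then show False using y' by simp
  qed
  then show ?thesis using n1 n2 by simp
qed



definition U01 :: "real measure" where "U01 = restrict_space lborel {0<..<1::real}"

lemma prob_U01: "prob_space U01"
  unfolding U01_def by (auto simp add: emeasure_restrict_space space_restrict_space intro!: prob_spaceI)

lemma sets_U01: "sets U01 = sets (restrict_space borel {0<..<1::real})"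
  unfolding U01_def by (rule sets_restrict_space_cong) simp

lemma Q_meas:
  assumes rd: "real_distribution \<nu>"
  shows "Q \<nu> \<in> measurable U01 \<nu>"
proof -
  have cd: "cdf_distribution \<nu>" using rd unfolding cdf_distribution_def .
  interpret cdf_distribution \<nu> by (rule cd)
  have "(\<lambda>\<omega>. Inf {x. \<omega> \<le> cdf \<nu> x}) \<in> borel_measurable (restrict_space borel {0<..<1})"
    by (rule measurable_CI)
  then have "Q \<nu> \<in> borel_measurable (restrict_space borel {0<..<1})"
    unfolding Q_def[abs_def] .
  then show ?thesis
    by (subst measurable_cong_sets[OF sets_U01 events_eq_borel])
qed

lemma Q_distr:
  assumes rd: "real_distribution \<nu>"
  shows "distr U01 \<nu> (Q \<nu>) = \<nu>"
proof -
  have cd: "cdf_distribution \<nu>" using rd unfolding cdf_distribution_def .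
  interpret cdf_distribution \<nu> by (rule cd)
  have "distr U01 \<nu> (Q \<nu>) = distr (restrict_space lborel {0<..<1::real}) borel (\<lambda>\<omega>. Inf {x. \<omega> \<le> cdf \<nu> x})"
    unfolding U01_def Q_def[abs_def] by (intro distr_cong) auto
  also have "\<dots> = \<nu>" by (rule distr_I_eq_M)
  finally show ?thesis .
qed

lemma couple:
  assumes fin: "finite I" and rd: "real_distribution \<nu>"
  shows "distr (PiM I (\<lambda>_. U01)) (PiM I (\<lambda>_. \<nu>)) (\<lambda>U. \<lambda>i\<in>I. Q \<nu> (U i)) = PiM I (\<lambda>_. \<nu>)"
proof -
  interpret real_distribution \<nu> by fact
  have "distr (PiM I (\<lambda>_. U01)) (PiM I (\<lambda>_. \<nu>)) (\<lambda>U. \<lambda>i\<in>I. Q \<nu> (U i)) = PiM I (\<lambda>i. distr U01 \<nu> (Q \<nu>))"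
    by (rule distr_PiM_dep[OF fin prob_U01 prob_space_axioms Q_meas[OF rd]])
  also have "\<dots> = PiM I (\<lambda>_. \<nu>)" using Q_distr[OF rd] by simp
  finally show ?thesis .
qed

definition Nf :: "nat set \<Rightarrow> real \<Rightarrow> (nat \<Rightarrow> real) \<Rightarrow> (nat \<Rightarrow> real) \<Rightarrow> real" where
  "Nf I u w b = (\<Sum>e\<in>sv I. if u < \<bar>\<Sum>i\<in>I. e i * (w i * b i)\<bar> then 1 else 0)"

lemma Nf_cnt: "finite I \<Longrightarrow> Nf I u w b = real (cnt I u (\<lambda>i. w i * b i))"
  unfolding Nf_def cnt_def using finite_sv[of I]
  by (simp add: sum.inter_filter[symmetric])

lemma Nf_bound: "finite I \<Longrightarrow> 0 \<le> Nf I u w b \<and> Nf I u w b \<le> real (card (sv I))"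
  unfolding Nf_def by (auto intro!: sum_nonneg sum_bounded_above[where K=1, simplified])

lemma meas_comp[measurable]:
  assumes rd: "real_distribution \<nu>" and i: "i \<in> I"
  shows "(\<lambda>b. b i) \<in> borel_measurable (PiM I (\<lambda>_. \<nu>))"
proof -
  have "(\<lambda>b. b i) \<in> measurable (PiM I (\<lambda>_. \<nu>)) \<nu>"
    using measurable_component_singleton[OF i, of "\<lambda>_. \<nu>"] by simp
  moreover have "measurable (PiM I (\<lambda>_. \<nu>)) \<nu> = borel_measurable (PiM I (\<lambda>_. \<nu>))"
    by (rule measurable_cong_sets) (auto simp: real_distribution.events_eq_borel[OF rd])
  ultimately show ?thesis by simp
qed

lemma Nf_meas:
  assumes rd: "real_distribution \<nu>"
  shows "Nf I u w \<in> borel_measurable (PiM I (\<lambda>_. \<nu>))"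
  unfolding Nf_def[abs_def] using rd by measurable

lemma flip_meas:
  assumes rd: "real_distribution \<nu>"
  shows "(\<lambda>b. \<lambda>i\<in>I. e i * b i) \<in> measurable (PiM I (\<lambda>_. \<nu>)) (PiM I (\<lambda>_. \<nu>))"
proof (rule measurable_restrict)
  fix i assume i: "i \<in> I"
  have "(\<lambda>b. e i * b i) \<in> borel_measurable (PiM I (\<lambda>_. \<nu>))" using meas_comp[OF rd i] by measurable
  moreover have "measurable (PiM I (\<lambda>_. \<nu>)) \<nu> = borel_measurable (PiM I (\<lambda>_. \<nu>))"
    by (rule measurable_cong_sets) (auto simp: real_distribution.events_eq_borel[OF rd])
  ultimately show "(\<lambda>b. e i * b i) \<in> measurable (PiM I (\<lambda>_. \<nu>)) \<nu>" by simp
qed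

lemma rep:
  assumes fin: "finite I" and rd: "real_distribution \<nu>" and sy: "symm \<nu>"
  shows "real (card (sv I)) * measure (PiM I (\<lambda>_. \<nu>)) {b \<in> space (PiM I (\<lambda>_. \<nu>)). u < \<bar>\<Sum>i\<in>I. b i * w i\<bar>}
    = integral\<^sup>L (PiM I (\<lambda>_. \<nu>)) (Nf I u w)"
proof -
  define P where "P = PiM I (\<lambda>_. \<nu>)"
  interpret P: prob_space P unfolding P_def
    by (intro prob_space_PiM real_distribution.axioms(1)[OF rd])
  define E where "E = {b \<in> space P. u < \<bar>\<Sum>i\<in>I. b i * w i\<bar>}"
  have Esets: "E \<in> sets P" unfolding E_def P_def using rd by measurable
  define g where "g e b = (if u < \<bar>\<Sum>i\<in>I. e i * (w i * b i)\<bar> then 1 else 0::real)" for e b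
  have gmeas: "g e \<in> borel_measurable P" for e unfolding g_def[abs_def] P_def using rd by measurable
  have gint: "integrable P (g e)" for e
    by (rule P.integrable_const_bound[where B=1]) (auto simp: g_def gmeas)
  have each: "measure P E = integral\<^sup>L P (g e)" if e: "e \<in> sv I" for e
  proof -
    have e': "\<And>i. i \<in> I \<Longrightarrow> e i \<in> {-1, 1}" using e unfolding sv_def by auto
    have "measure P E = integral\<^sup>L P (indicator E)"
      using Esets sets.sets_into_space[OF Esets] by (simp add: Int_absorb2)
    also have "\<dots> = integral\<^sup>L (distr P P (\<lambda>b. \<lambda>i\<in>I. e i * b i)) (indicator E)"
      unfolding P_def using flip_PiM[OF fin rd sy e'] by simp
    also have "\<dots> = integral\<^sup>L P (\<lambda>b. indicator E (\<lambda>i\<in>I. e i * b i))"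
      using Esets by (intro integral_distr) (auto simp: P_def flip_meas[OF rd])
    also have "\<dots> = integral\<^sup>L P (g e)"
    proof (rule Bochner_Integration.integral_cong[OF refl])
      fix b assume b: "b \<in> space P"
      have "(\<lambda>i\<in>I. e i * b i) \<in> space P"
        using measurable_space[OF flip_meas[OF rd] b[unfolded P_def]] unfolding P_def .
      moreover have "(\<Sum>i\<in>I. (\<lambda>i\<in>I. e i * b i) i * w i) = (\<Sum>i\<in>I. e i * (w i * b i))"
        by (intro sum.cong) (auto simp: algebra_simps)
      ultimately show "indicator E (\<lambda>i\<in>I. e i * b i) = g e b"
        unfolding E_def g_def indicator_def by auto
    qed
    finally show ?thesis .
  qed
  have "real (card (sv I)) * measure P E = (\<Sum>e\<in>sv I. measure P E)" by simp
  also have "\<dots> = (\<Sum>e\<in>sv I. integral\<^sup>L P (g e))" by (intro sum.cong refl each)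
  also have "\<dots> = integral\<^sup>L P (\<lambda>b. \<Sum>e\<in>sv I. g e b)"
    by (rule Bochner_Integration.integral_sum[symmetric]) (rule gint)
  also have "(\<lambda>b. \<Sum>e\<in>sv I. g e b) = Nf I u w" unfolding Nf_def g_def by (simp add: fun_eq_iff)
  finally show ?thesis unfolding P_def E_def .
qed

lemma restrict_meas:
  assumes f: "\<And>i. i \<in> I \<Longrightarrow> f i \<in> measurable M M'"
  shows "(\<lambda>x. \<lambda>i\<in>I. f i (x i)) \<in> measurable (PiM I (\<lambda>_. M)) (PiM I (\<lambda>_. M'))"
proof (rule measurable_restrict)
  fix i assume i: "i \<in> I"
  have "(\<lambda>x. x i) \<in> measurable (Pi\<^sub>M I (\<lambda>_. M)) M"
    using measurable_component_singleton[OF i, of "\<lambda>_. M"] by simp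
  then show "(\<lambda>x. f i (x i)) \<in> measurable (Pi\<^sub>M I (\<lambda>_. M)) M'"
    using f[OF i] by (rule measurable_compose)
qed

lemma compare:
  fixes I :: "nat set" and w :: "nat \<Rightarrow> real"
  assumes fin: "finite I" and rd1: "real_distribution \<nu>1" and sy1: "symm \<nu>1"
    and rd2: "real_distribution \<nu>2" and sy2: "symm \<nu>2"
    and tail: "\<And>t. 0 < t \<Longrightarrow> measure \<nu>2 {x. t < \<bar>x\<bar>} \<le> measure \<nu>1 {x. t < \<bar>x\<bar>}"
    and u: "0 \<le> u"
  shows "measure (PiM I (\<lambda>_. \<nu>2)) {b \<in> space (PiM I (\<lambda>_. \<nu>2)). u < \<bar>\<Sum>i\<in>I. b i * w i\<bar>}
     \<le> 2 * measure (PiM I (\<lambda>_. \<nu>1)) {b \<in> space (PiM I (\<lambda>_. \<nu>1)). u < \<bar>\<Sum>i\<in>I. b i * w i\<bar>}"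
proof -
  define L where "L = PiM I (\<lambda>_. U01)"
  interpret L: prob_space L unfolding L_def by (intro prob_space_PiM prob_U01)
  define c1 where "c1 U = (\<lambda>i\<in>I. Q \<nu>1 (U i))" for U
  define c2 where "c2 U = (\<lambda>i\<in>I. Q \<nu>2 (U i))" for U
  have c1m: "c1 \<in> measurable L (PiM I (\<lambda>_. \<nu>1))" unfolding c1_def[abs_def] L_def
    by (rule restrict_meas) (rule Q_meas[OF rd1])
  have c2m: "c2 \<in> measurable L (PiM I (\<lambda>_. \<nu>2))" unfolding c2_def[abs_def] L_def
    by (rule restrict_meas) (rule Q_meas[OF rd2])
  define K where "K = real (card (sv I))"
  have Kpos: "0 < K"
  proof -
    have "(\<lambda>i\<in>I. 1) \<in> sv I" unfolding sv_def by auto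
    then show ?thesis unfolding K_def using finite_sv[OF fin] card_gt_0_iff by force
  qed
  have int1: "K * measure (PiM I (\<lambda>_. \<nu>1)) {b \<in> space (PiM I (\<lambda>_. \<nu>1)). u < \<bar>\<Sum>i\<in>I. b i * w i\<bar>}
     = integral\<^sup>L L (\<lambda>U. Nf I u w (c1 U))"
  proof -
    have "K * measure (PiM I (\<lambda>_. \<nu>1)) {b \<in> space (PiM I (\<lambda>_. \<nu>1)). u < \<bar>\<Sum>i\<in>I. b i * w i\<bar>}
      = integral\<^sup>L (PiM I (\<lambda>_. \<nu>1)) (Nf I u w)" unfolding K_def by (rule rep[OF fin rd1 sy1])
    also have "\<dots> = integral\<^sup>L (distr L (PiM I (\<lambda>_. \<nu>1)) c1) (Nf I u w)"
      using couple[OF fin rd1] unfolding L_def c1_def[abs_def] by simp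
    also have "\<dots> = integral\<^sup>L L (\<lambda>U. Nf I u w (c1 U))"
      by (rule integral_distr[OF c1m Nf_meas[OF rd1]])
    finally show ?thesis .
  qed
  have int2: "K * measure (PiM I (\<lambda>_. \<nu>2)) {b \<in> space (PiM I (\<lambda>_. \<nu>2)). u < \<bar>\<Sum>i\<in>I. b i * w i\<bar>}
     = integral\<^sup>L L (\<lambda>U. Nf I u w (c2 U))"
  proof -
    have "K * measure (PiM I (\<lambda>_. \<nu>2)) {b \<in> space (PiM I (\<lambda>_. \<nu>2)). u < \<bar>\<Sum>i\<in>I. b i * w i\<bar>}
      = integral\<^sup>L (PiM I (\<lambda>_. \<nu>2)) (Nf I u w)" unfolding K_def by (rule rep[OF fin rd2 sy2])
    also have "\<dots> = integral\<^sup>L (distr L (PiM I (\<lambda>_. \<nu>2)) c2) (Nf I u w)"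
      using couple[OF fin rd2] unfolding L_def c2_def[abs_def] by simp
    also have "\<dots> = integral\<^sup>L L (\<lambda>U. Nf I u w (c2 U))"
      by (rule integral_distr[OF c2m Nf_meas[OF rd2]])
    finally show ?thesis .
  qed
  have m1: "(\<lambda>U. Nf I u w (c1 U)) \<in> borel_measurable L"
    by (rule measurable_compose[OF c1m Nf_meas[OF rd1]])
  have m2: "(\<lambda>U. Nf I u w (c2 U)) \<in> borel_measurable L"
    by (rule measurable_compose[OF c2m Nf_meas[OF rd2]])
  have i1: "integrable L (\<lambda>U. Nf I u w (c1 U))"
    by (rule L.integrable_const_bound[where B="real (card (sv I))"]) (auto simp: m1 Nf_bound[OF fin])
  have i2: "integrable L (\<lambda>U. Nf I u w (c2 U))"
    by (rule L.integrable_const_bound[where B="real (card (sv I))"]) (auto simp: m2 Nf_bound[OF fin])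
  have pw: "Nf I u w (c2 U) \<le> 2 * Nf I u w (c1 U)" if U: "U \<in> space L" for U
  proof -
    have Ui: "0 < U i \<and> U i < 1" if i: "i \<in> I" for i
      using U i unfolding L_def U01_def by (auto simp: space_PiM PiE_iff space_restrict_space)
    have "cnt I u (\<lambda>i. w i * c2 U i) \<le> 2 * cnt I u (\<lambda>i. w i * c1 U i)"
    proof (rule contraction[OF fin _ u])
      fix i assume i: "i \<in> I"
      have "\<bar>Q \<nu>2 (U i)\<bar> \<le> \<bar>Q \<nu>1 (U i)\<bar>"
        using Q_compare[OF rd1 sy1 rd2 sy2 tail] Ui[OF i] by auto
      then show "\<bar>w i * c2 U i\<bar> \<le> \<bar>w i * c1 U i\<bar>"
        unfolding c1_def c2_def using i by (simp add: abs_mult mult_left_mono)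
    qed
    then have "real (cnt I u (\<lambda>i. w i * c2 U i)) \<le> 2 * real (cnt I u (\<lambda>i. w i * c1 U i))"
      by linarith
    then show ?thesis using Nf_cnt[OF fin] by simp
  qed
  have "integral\<^sup>L L (\<lambda>U. Nf I u w (c2 U)) \<le> integral\<^sup>L L (\<lambda>U. 2 * Nf I u w (c1 U))"
    by (rule Bochner_Integration.integral_mono[OF i2 _ pw]) (auto intro: i1)
  also have "\<dots> = 2 * integral\<^sup>L L (\<lambda>U. Nf I u w (c1 U))" by simp
  finally have "K * measure (PiM I (\<lambda>_. \<nu>2)) {b \<in> space (PiM I (\<lambda>_. \<nu>2)). u < \<bar>\<Sum>i\<in>I. b i * w i\<bar>}
     \<le> K * (2 * measure (PiM I (\<lambda>_. \<nu>1)) {b \<in> space (PiM I (\<lambda>_. \<nu>1)). u < \<bar>\<Sum>i\<in>I. b i * w i\<bar>})"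
    using int1 int2 by (simp add: algebra_simps)
  then show ?thesis using Kpos by simp
qed



definition nG :: "real \<Rightarrow> real measure" where
  "nG \<sigma> = density lborel (normal_density 0 \<sigma>)"

lemma nG_rd: "0 < \<sigma> \<Longrightarrow> real_distribution (nG \<sigma>)"
  unfolding real_distribution_def real_distribution_axioms_def nG_def
  using prob_space_normal_density by auto

lemma nG_distr_affine:
  assumes s: "0 < \<sigma>" and a: "a \<noteq> 0"
  shows "distr (nG \<sigma>) lborel (\<lambda>x. a * x) = nG (\<bar>a\<bar> * \<sigma>)"
proof -
  interpret prob_space "nG \<sigma>" using nG_rd[OF s] real_distribution_def by auto
  have d: "distributed (nG \<sigma>) lborel (\<lambda>x. x) (normal_density 0 \<sigma>)"
    unfolding distributed_def nG_def by (auto simp: distr_id2)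
  have "distributed (nG \<sigma>) lborel (\<lambda>x. 0 + a * x) (normal_density (0 + a * 0) (\<bar>a\<bar> * \<sigma>))"
    by (rule normal_density_affine[OF d s a])
  then show ?thesis unfolding distributed_def nG_def by simp
qed

lemma nG_symm: "0 < \<sigma> \<Longrightarrow> symm (nG \<sigma>)"
  unfolding symm_def
proof -
  assume s: "0 < \<sigma>"
  have "distr (nG \<sigma>) borel uminus = distr (nG \<sigma>) lborel (\<lambda>x. (-1) * x)"
    by (intro distr_cong) auto
  also have "\<dots> = nG \<sigma>" using nG_distr_affine[OF s, of "-1"] by simp
  finally show "distr (nG \<sigma>) borel uminus = nG \<sigma>" .
qed

lemma nG_tail:
  assumes s: "0 < \<sigma>"
  shows "measure (nG \<sigma>) {x. t < \<bar>x\<bar>} = measure (density lborel std_normal_density) {g. t < \<bar>\<sigma> * g\<bar>}"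
proof -
  have "nG \<sigma> = distr (nG 1) lborel (\<lambda>x. \<sigma> * x)" using nG_distr_affine[of 1 \<sigma>] s by simp
  then have "measure (nG \<sigma>) {x. t < \<bar>x\<bar>} = measure (distr (nG 1) lborel (\<lambda>x. \<sigma> * x)) {x. t < \<bar>x\<bar>}" by simp
  also have "\<dots> = measure (nG 1) ((\<lambda>x. \<sigma> * x) -` {x. t < \<bar>x\<bar>} \<inter> space (nG 1))"
    by (rule measure_distr) (auto simp: nG_def)
  also have "\<dots> = measure (density lborel std_normal_density) {g. t < \<bar>\<sigma> * g\<bar>}"
    by (simp add: nG_def)
  finally show ?thesis .
qed

lemma nG_sum:
  fixes I :: "nat set" and w :: "nat \<Rightarrow> real"
  assumes fin: "finite I" and s: "0 < \<sigma>" and w: "(\<Sum>i\<in>I. (w i)^2) = 1"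
  shows "measure (PiM I (\<lambda>_. nG \<sigma>)) {b \<in> space (PiM I (\<lambda>_. nG \<sigma>)). u < \<bar>\<Sum>i\<in>I. b i * w i\<bar>}
    = measure (nG \<sigma>) {x. u < \<bar>x\<bar>}"
proof -
  define P where "P = PiM I (\<lambda>_. nG \<sigma>)"
  have rd: "real_distribution (nG \<sigma>)" by (rule nG_rd[OF s])
  have ps: "prob_space (nG \<sigma>)" using rd real_distribution_def by auto
  interpret P: prob_space P unfolding P_def by (intro prob_space_PiM ps)
  have Ine: "I \<noteq> {}" using w by auto
  have comp: "(\<lambda>b. b i) \<in> measurable P (nG \<sigma>)" if "i \<in> I" for i
    using measurable_component_singleton[OF that, of "\<lambda>_. nG \<sigma>"] unfolding P_def by simp
  have dcomp: "distr P (nG \<sigma>) (\<lambda>b. b i) = nG \<sigma>" if "i \<in> I" for i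
    unfolding P_def by (rule distr_PiM_component[OF ps that])
  have ind0: "P.indep_vars (\<lambda>_. nG \<sigma>) (\<lambda>i b. b i) I"
  proof (subst P.indep_vars_iff_distr_eq_PiM'[OF Ine])
    show "\<And>i. i \<in> I \<Longrightarrow> (\<lambda>b. b i) \<in> measurable P (nG \<sigma>)" using comp by auto
    have "distr P (Pi\<^sub>M I (\<lambda>i. nG \<sigma>)) (\<lambda>x. \<lambda>i\<in>I. x i) = distr P P (\<lambda>x. x)"
      unfolding P_def by (intro distr_cong) (auto simp: space_PiM PiE_iff extensional_restrict)
    also have "\<dots> = P" by simp
    also have "P = (\<Pi>\<^sub>M i\<in>I. distr P (nG \<sigma>) (\<lambda>b. b i))"
      unfolding P_def by (intro PiM_cong refl) (simp add: dcomp[unfolded P_def])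
    finally show "distr P (Pi\<^sub>M I (\<lambda>i. nG \<sigma>)) (\<lambda>x. \<lambda>i\<in>I. x i) = (\<Pi>\<^sub>M i\<in>I. distr P (nG \<sigma>) (\<lambda>b. b i))" .
  qed
  define J where "J = {i \<in> I. w i \<noteq> 0}"
  have finJ: "finite J" using fin J_def by auto
  have sumJ: "(\<Sum>i\<in>J. (w i)^2) = 1"
  proof -
    have "(\<Sum>i\<in>J. (w i)^2) = (\<Sum>i\<in>I. (w i)^2)"
      by (rule sum.mono_neutral_left[OF fin]) (auto simp: J_def)
    then show ?thesis using w by simp
  qed
  then have Jne: "J \<noteq> {}" by auto
  have ind: "P.indep_vars (\<lambda>_. borel) (\<lambda>i b. w i * b i) J"
  proof -
    have "P.indep_vars (\<lambda>_. borel) (\<lambda>i b. w i * b i) I"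
      using P.indep_vars_compose2[OF ind0, of "\<lambda>i x. w i * x" "\<lambda>_. borel"]
      by (simp add: measurable_cong_sets[OF real_distribution.events_eq_borel[OF rd] refl])
    then show ?thesis by (rule P.indep_vars_subset) (auto simp: J_def)
  qed
  have dist: "distributed P lborel (\<lambda>b. w i * b i) (normal_density 0 (\<bar>w i\<bar> * \<sigma>))" if i: "i \<in> J" for i
  proof -
    have iI: "i \<in> I" using i J_def by auto
    have "distr P lborel (\<lambda>b. b i) = distr P (nG \<sigma>) (\<lambda>b. b i)"
      by (intro distr_cong) (auto simp: nG_def)
    then have "distr P lborel (\<lambda>b. b i) = density lborel (normal_density 0 \<sigma>)"
      using dcomp[OF iI] by (simp add: nG_def)
    moreover have "(\<lambda>b. b i) \<in> measurable P lborel"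
      using comp[OF iI] by (simp add: measurable_cong_sets[OF refl, of "nG \<sigma>" lborel] nG_def)
    ultimately have d: "distributed P lborel (\<lambda>b. b i) (normal_density 0 \<sigma>)"
      unfolding distributed_def by auto
    have "w i \<noteq> 0" using i J_def by auto
    from P.normal_density_affine[OF d s this, of 0] show ?thesis by simp
  qed
  have "distributed P lborel (\<lambda>b. \<Sum>i\<in>J. w i * b i) (normal_density (\<Sum>i\<in>J. 0) (sqrt (\<Sum>i\<in>J. (\<bar>w i\<bar> * \<sigma>)\<^sup>2)))"
    by (rule P.sum_indep_normal[OF finJ Jne ind]) (auto simp: J_def s dist)
  moreover have "sqrt (\<Sum>i\<in>J. (\<bar>w i\<bar> * \<sigma>)\<^sup>2) = \<sigma>"
  proof -
    have "(\<Sum>i\<in>J. (\<bar>w i\<bar> * \<sigma>)\<^sup>2) = \<sigma>^2 * (\<Sum>i\<in>J. (w i)^2)"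
      by (simp add: sum_distrib_left power_mult_distrib algebra_simps)
    then show ?thesis using sumJ s by simp
  qed
  ultimately have dS: "distributed P lborel (\<lambda>b. \<Sum>i\<in>J. w i * b i) (normal_density 0 \<sigma>)" by simp
  have "measure P {b \<in> space P. u < \<bar>\<Sum>i\<in>I. b i * w i\<bar>}
      = measure P ((\<lambda>b. \<Sum>i\<in>J. w i * b i) -` {x. u < \<bar>x\<bar>} \<inter> space P)"
  proof -
    have "(\<Sum>i\<in>I. b i * w i) = (\<Sum>i\<in>J. w i * b i)" for b
    proof -
      have "(\<Sum>i\<in>I. b i * w i) = (\<Sum>i\<in>I. w i * b i)" by (simp add: mult.commute)
      also have "\<dots> = (\<Sum>i\<in>J. w i * b i)"
        by (rule sum.mono_neutral_right[OF fin]) (auto simp: J_def)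
      finally show ?thesis .
    qed
    then show ?thesis by (intro arg_cong[where f="measure P"]) auto
  qed
  also have "\<dots> = measure (distr P lborel (\<lambda>b. \<Sum>i\<in>J. w i * b i)) {x. u < \<bar>x\<bar>}"
    using dS unfolding distributed_def by (intro measure_distr[symmetric]) auto
  also have "\<dots> = measure (nG \<sigma>) {x. u < \<bar>x\<bar>}"
    using dS unfolding distributed_def nG_def by simp
  finally show ?thesis unfolding P_def .
qed

lemma nG_tail_lower:
  assumes s: "0 < \<sigma>" and u: "0 \<le> u"
  shows "exp (-(u^2/\<sigma>^2) - 1) / sqrt (2*pi) \<le> measure (nG \<sigma>) {x. u < \<bar>x\<bar>}"
proof -
  interpret real_distribution "nG \<sigma>" by (rule nG_rd[OF s])
  define c where "c = normal_density 0 \<sigma> (u + \<sigma>)"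
  define A where "A = {u<..u+\<sigma>}"
  have c0: "0 \<le> c" unfolding c_def by simp
  have pt: "ennreal c * indicator A x \<le> ennreal (normal_density 0 \<sigma> x) * indicator A x" for x
  proof (cases "x \<in> A")
    case True
    then have "x^2 \<le> (u+\<sigma>)^2" using u unfolding A_def by (intro power_mono) auto
    then have "(- ((u+\<sigma>)^2)) / (2*\<sigma>^2) \<le> (- (x^2)) / (2*\<sigma>^2)"
      using s by (intro divide_right_mono) auto
    then have e: "exp ((- ((u+\<sigma>)^2)) / (2*\<sigma>^2)) \<le> exp ((- (x^2)) / (2*\<sigma>^2))"
      by (subst exp_le_cancel_iff)
    have "c \<le> normal_density 0 \<sigma> x"
      unfolding c_def normal_density_def by (intro mult_left_mono) (use e in simp_all)
    then show ?thesis using True by (simp add: ennreal_leI)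
  qed simp
  have "ennreal (c * \<sigma>) = (\<integral>\<^sup>+ x. ennreal c * indicator A x \<partial>lborel)"
    using s c0 unfolding A_def by (subst nn_integral_cmult_indicator) (auto simp: ennreal_mult)
  also have "\<dots> \<le> (\<integral>\<^sup>+ x. ennreal (normal_density 0 \<sigma> x) * indicator A x \<partial>lborel)"
    by (intro nn_integral_mono pt)
  also have "\<dots> = emeasure (nG \<sigma>) A"
    unfolding nG_def A_def by (subst emeasure_density) auto
  also have "\<dots> = ennreal (measure (nG \<sigma>) A)" by (simp add: emeasure_eq_measure)
  finally have cA: "c * \<sigma> \<le> measure (nG \<sigma>) A" by (simp add: ennreal_le_iff)
  have "measure (nG \<sigma>) A \<le> measure (nG \<sigma>) {x. u < \<bar>x\<bar>}"
    unfolding A_def by (intro finite_measure_mono) auto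
  moreover have "exp (-(u^2/\<sigma>^2) - 1) / sqrt (2*pi) \<le> c * \<sigma>"
  proof -
    have sq: "sqrt (2 * pi * \<sigma>\<^sup>2) = sqrt (2*pi) * \<sigma>" using s by (simp add: real_sqrt_mult)
    have "c = exp (- (u + \<sigma>)\<^sup>2 / (2 * \<sigma>\<^sup>2)) / (sqrt (2*pi) * \<sigma>)"
      unfolding c_def normal_density_def sq by simp
    then have ce: "c * \<sigma> = exp (- (u + \<sigma>)\<^sup>2 / (2 * \<sigma>\<^sup>2)) / sqrt (2*pi)"
      using s by simp
    have h: "(u + \<sigma>)\<^sup>2 + (u - \<sigma>)\<^sup>2 = 2 * u^2 + 2 * \<sigma>^2" by (simp add: power2_eq_square algebra_simps)
    have "0 \<le> (u - \<sigma>)\<^sup>2" by simp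
    then have h2: "(u + \<sigma>)\<^sup>2 \<le> 2 * u^2 + 2 * \<sigma>^2" using h by linarith
    have h3: "u^2/\<sigma>^2 + 1 = (2 * u^2 + 2 * \<sigma>^2) / (2 * \<sigma>\<^sup>2)" using s by (simp add: field_simps)
    have "(u + \<sigma>)\<^sup>2 / (2 * \<sigma>\<^sup>2) \<le> u^2/\<sigma>^2 + 1"
      unfolding h3 using h2 s by (intro divide_right_mono) auto
    then have "exp (-(u^2/\<sigma>^2) - 1) \<le> exp (- (u + \<sigma>)\<^sup>2 / (2 * \<sigma>\<^sup>2))" by simp
    then show ?thesis unfolding ce by (simp add: divide_right_mono)
  qed
  ultimately show ?thesis using cA by linarith
qed


lemma final_arith:
  fixes \<sigma> u P :: real
  assumes s: "0 < \<sigma>" and h: "exp (-(u^2/\<sigma>^2) - 1) / sqrt (2*pi) \<le> 2 * P"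
  shows "1/20 * exp (- (2 * u^2) / (2 * \<sigma>^2)) < P"
proof -
  define E where "E = exp (-(u^2/\<sigma>^2))"
  have E0: "0 < E" unfolding E_def by simp
  have e1: "exp (-(u^2/\<sigma>^2) - 1) = E * exp (-1)" unfolding E_def by (simp add: exp_diff exp_minus field_simps)
  have em1: "1/3 \<le> exp (-1::real)"
    using exp_le by (simp add: exp_minus field_simps)
  have sp: "sqrt (2*pi) \<le> 3"
  proof -
    have "2*pi \<le> 3^2" using pi_less_4 by simp
    then show ?thesis by (metis real_sqrt_le_iff real_sqrt_pow2_iff zero_le_numeral real_sqrt_power real_sqrt_abs abs_numeral real_sqrt_le_mono power2_eq_square real_sqrt_mult_self)
  qed
  have spos: "0 < sqrt (2*pi)" by simp
  have "E / 9 \<le> E * exp (-1) / sqrt (2*pi)"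
  proof -
    have "E / 9 = E * (1/3) / 3" by simp
    also have "\<dots> \<le> E * exp (-1) / 3" using em1 E0 by (intro divide_right_mono mult_left_mono) auto
    also have "\<dots> \<le> E * exp (-1) / sqrt (2*pi)" using sp spos E0
      by (intro divide_left_mono) auto
    finally show ?thesis .
  qed
  moreover have "E * exp (-1) / sqrt (2*pi) \<le> 2 * P" using h e1 by simp
  ultimately have "E / 9 \<le> 2 * P" by linarith
  then have "E / 18 \<le> P" by simp
  moreover have "exp (- (2 * u^2) / (2 * \<sigma>^2)) = E" unfolding E_def using s by simp
  ultimately show ?thesis using E0 by simp
qed

theorem lemma4p8:
  shows "\<exists>c1>0. \<exists>c2>0. \<forall>(m::nat) (\<mu>::real measure) (\<sigma>::real).
     m > 0 \<and> symmetric_law \<mu> \<and> super_gaussian \<mu> \<sigma> \<longrightarrow>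
     (\<forall>u (w::nat \<Rightarrow> real). u \<ge> \<sigma> / 4 \<and> (\<Sum>i<m. (w i)^2) = 1 \<longrightarrow>
        measure (PiM {..<m} (\<lambda>_. \<mu>)) {b \<in> space (PiM {..<m} (\<lambda>_. \<mu>)). \<bar>\<Sum>i<m. b i * w i\<bar> > u}
          > c1 * exp (- (c2 * u^2) / (2 * \<sigma>^2)))"
proof (rule exI[of _ "1/20::real"], rule conjI, simp, rule exI[of _ "2::real"], rule conjI, simp, intro allI impI)
  fix m :: nat and \<mu> :: "real measure" and \<sigma> u :: real and w :: "nat \<Rightarrow> real"
  assume A: "0 < m \<and> symmetric_law \<mu> \<and> super_gaussian \<mu> \<sigma>"
  assume B: "\<sigma> / 4 \<le> u \<and> (\<Sum>i<m. (w i)^2) = 1"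
  have sg: "super_gaussian \<mu> \<sigma>" using A by simp
  have cu: "centered_unit_variance \<mu>" and s: "0 < \<sigma>"
    and tl: "\<And>t. 0 < t \<Longrightarrow> measure (density lborel std_normal_density) {g. \<bar>\<sigma> * g\<bar> > t} \<le> measure \<mu> {x. \<bar>x\<bar> > t}"
    using sg unfolding super_gaussian_def by auto
  have rd: "real_distribution \<mu>"
    using cu unfolding centered_unit_variance_def real_distribution_def real_distribution_axioms_def by auto
  have sy: "symm \<mu>" using A unfolding symmetric_law_def symm_def by simp
  have u: "0 \<le> u" using B s by simp
  have tail: "measure (nG \<sigma>) {x. t < \<bar>x\<bar>} \<le> measure \<mu> {x. t < \<bar>x\<bar>}" if "0 < t" for t
    using tl[OF that] nG_tail[OF s, of t] by simp
  have fin: "finite {..<m}" by simp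
  have "measure (PiM {..<m} (\<lambda>_. nG \<sigma>)) {b \<in> space (PiM {..<m} (\<lambda>_. nG \<sigma>)). u < \<bar>\<Sum>i\<in>{..<m}. b i * w i\<bar>}
     \<le> 2 * measure (PiM {..<m} (\<lambda>_. \<mu>)) {b \<in> space (PiM {..<m} (\<lambda>_. \<mu>)). u < \<bar>\<Sum>i\<in>{..<m}. b i * w i\<bar>}"
    by (rule compare[OF fin rd sy nG_rd[OF s] nG_symm[OF s] tail u])
  moreover have "measure (PiM {..<m} (\<lambda>_. nG \<sigma>)) {b \<in> space (PiM {..<m} (\<lambda>_. nG \<sigma>)). u < \<bar>\<Sum>i\<in>{..<m}. b i * w i\<bar>}
     = measure (nG \<sigma>) {x. u < \<bar>x\<bar>}"
    by (rule nG_sum[OF fin s]) (use B in simp)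
  moreover have "exp (-(u^2/\<sigma>^2) - 1) / sqrt (2*pi) \<le> measure (nG \<sigma>) {x. u < \<bar>x\<bar>}"
    by (rule nG_tail_lower[OF s u])
  ultimately have "exp (-(u^2/\<sigma>^2) - 1) / sqrt (2*pi)
     \<le> 2 * measure (PiM {..<m} (\<lambda>_. \<mu>)) {b \<in> space (PiM {..<m} (\<lambda>_. \<mu>)). u < \<bar>\<Sum>i\<in>{..<m}. b i * w i\<bar>}"
    by linarith
  from final_arith[OF s this]
  show "1/20 * exp (- (2 * u^2) / (2 * \<sigma>^2)) < measure (PiM {..<m} (\<lambda>_. \<mu>)) {b \<in> space (PiM {..<m} (\<lambda>_. \<mu>)). \<bar>\<Sum>i<m. b i * w i\<bar> > u}"
    by simp
qed

end
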